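(* Let $p=2m\ge 4$ be even and let $U$ be the graph obtained from the cycle $C_p$ (vertices $v_1,\dots,v_p$) by attaching a single pendant vertex $u$ adjacent to $v_1$. Let $\tilde\Delta$ be the distance squared matrix of $C_p$ (equivalently, the principal submatrix of the distance squared matrix of $U$ indexed by $v_1,\dots,v_p$), and let $\mathbf x\in\mathbb R^p$ have entries $x_i=d_U(u,v_i)^2$. Then $\tilde\Delta$ is invertible and \[ \mathbf x^T\tilde\Delta^{-1}\mathbf x>0. \]
   Context: For a connected graph with vertices $1,\dots,n$, the distance squared matrix is the matrix with $(i,j)$ entry $d_{ij}^2$, where $d_{ij}$ is the graph distance between $i$ and $j$; $d_U$ denotes distance in $U$. *)

theory Defs
  imports "Jordan_Normal_Form.Matrix"
begin

definition is_walk :: "(nat \<Rightarrow> nat \<Rightarrow> bool) \<Rightarrow> nat list \<Rightarrow> bool" where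
  "is_walk E xs \<longleftrightarrow> xs \<noteq> [] \<and> (\<forall>i. Suc i < length xs \<longrightarrow> E (xs ! i) (xs ! Suc i))"

definition gdist :: "(nat \<Rightarrow> nat \<Rightarrow> bool) \<Rightarrow> nat \<Rightarrow> nat \<Rightarrow> nat" where
  "gdist E a b = (LEAST n. \<exists>xs. is_walk E xs \<and> hd xs = a \<and> last xs = b \<and> length xs = Suc n)"

text \<open>Cycle C_p on vertices 0..p-1 (vertex i stands for v_(i+1)).\<close>
definition cycle_adj :: "nat \<Rightarrow> nat \<Rightarrow> nat \<Rightarrow> bool" where
  "cycle_adj p i j \<longleftrightarrow> i < p \<and> j < p \<and> (j = Suc i mod p \<or> i = Suc j mod p)"

text \<open>Unicyclic graph U: C_p plus pendant vertex u = p adjacent to v_1 = 0.\<close>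
definition pendant_adj :: "nat \<Rightarrow> nat \<Rightarrow> nat \<Rightarrow> bool" where
  "pendant_adj p i j \<longleftrightarrow> cycle_adj p i j \<or> (i = p \<and> j = 0) \<or> (i = 0 \<and> j = p)"

definition cycle_dsq :: "nat \<Rightarrow> real mat" where
  "cycle_dsq p = mat p p (\<lambda>(i, j). real (gdist (cycle_adj p) i j) ^ 2)"

definition pendant_vec :: "nat \<Rightarrow> real vec" where
  "pendant_vec p = vec p (\<lambda>i. real (gdist (pendant_adj p) p i) ^ 2)"

end

theory Submission
  imports Defs "Jordan_Normal_Form.Determinant"
begin


definition cd :: "nat \<Rightarrow> nat \<Rightarrow> nat \<Rightarrow> nat" where
  "cd p i j = min ((j - i) + (i - j)) (p - ((j - i) + (i - j)))"

lemma walk_bound: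
  assumes w: "is_walk E xs" and step: "\<And>u v. E u v \<Longrightarrow> f v \<le> f u + 1"
  shows "k < length xs \<Longrightarrow> f (xs ! k) \<le> f (hd xs) + k"
proof (induction k)
  case 0
  then show ?case using w by (simp add: hd_conv_nth is_walk_def)
next
  case (Suc k)
  then have "E (xs ! k) (xs ! Suc k)" using w by (simp add: is_walk_def)
  then show ?case using Suc step[of "xs ! k" "xs ! Suc k"] by simp
qed

lemma walk_bound_last:
  assumes w: "is_walk E xs" and step: "\<And>u v. E u v \<Longrightarrow> f v \<le> f u + 1"
  shows "f (last xs) \<le> f (hd xs) + (length xs - 1)"
proof -
  have ne: "xs \<noteq> []" using w by (simp add: is_walk_def)
  show ?thesis using walk_bound[OF w step, where k="length xs - 1"] ne by (simp add: last_conv_nth)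
qed

lemma gdist_eq:
  assumes w: "is_walk E xs" "hd xs = a" "last xs = b" "length xs = Suc d"
    and step: "\<And>u v. E u v \<Longrightarrow> f v \<le> f u + 1" and fa: "f a = 0" and fb: "f b = d"
  shows "gdist E a b = d"
  unfolding gdist_def
proof (rule Least_equality)
  show "\<exists>xs. is_walk E xs \<and> hd xs = a \<and> last xs = b \<and> length xs = Suc d" using w by blast
next
  fix n assume "\<exists>xs. is_walk E xs \<and> hd xs = a \<and> last xs = b \<and> length xs = Suc n"
  then obtain ys where "is_walk E ys" "hd ys = a" "last ys = b" "length ys = Suc n" by blast
  then show "d \<le> n" using walk_bound_last[of E ys f] step fa fb by simp
qed

lemma fwd_walk:
  assumes "0 < p"
  shows "is_walk (cycle_adj p) (map (\<lambda>t. (i + t) mod p) [0..<Suc d])"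
  unfolding is_walk_def
proof (intro conjI allI impI)
  show "map (\<lambda>t. (i + t) mod p) [0..<Suc d] \<noteq> []" by simp
  fix k assume "Suc k < length (map (\<lambda>t. (i + t) mod p) [0..<Suc d])"
  hence kd: "k < d" by simp
  have e1: "map (\<lambda>t. (i + t) mod p) [0..<Suc d] ! k = (i + k) mod p"
    using kd by (simp del: upt_Suc)
  have e2: "map (\<lambda>t. (i + t) mod p) [0..<Suc d] ! Suc k = (i + Suc k) mod p"
    using kd by (simp del: upt_Suc)
  have "(i + Suc k) mod p = Suc ((i + k) mod p) mod p" by (metis add_Suc_right mod_Suc_eq)
  then show "cycle_adj p (map (\<lambda>t. (i + t) mod p) [0..<Suc d] ! k)
     (map (\<lambda>t. (i + t) mod p) [0..<Suc d] ! Suc k)"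
    unfolding e1 e2 cycle_adj_def using assms by simp
qed

lemma bwd_walk:
  assumes "0 < p" "d \<le> p"
  shows "is_walk (cycle_adj p) (map (\<lambda>t. (i + p - t) mod p) [0..<Suc d])"
  unfolding is_walk_def
proof (intro conjI allI impI)
  show "map (\<lambda>t. (i + p - t) mod p) [0..<Suc d] \<noteq> []" by simp
  fix k assume "Suc k < length (map (\<lambda>t. (i + p - t) mod p) [0..<Suc d])"
  hence kd: "k < d" by simp
  have e1: "map (\<lambda>t. (i + p - t) mod p) [0..<Suc d] ! k = (i + p - k) mod p"
    using kd by (simp del: upt_Suc)
  have e2: "map (\<lambda>t. (i + p - t) mod p) [0..<Suc d] ! Suc k = (i + p - Suc k) mod p"
    using kd by (simp del: upt_Suc)
  have "i + p - k = Suc (i + p - Suc k)" using assms kd by simp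
  then have "(i + p - k) mod p = Suc ((i + p - Suc k) mod p) mod p" by (metis mod_Suc_eq)
  then show "cycle_adj p (map (\<lambda>t. (i + p - t) mod p) [0..<Suc d] ! k)
     (map (\<lambda>t. (i + p - t) mod p) [0..<Suc d] ! Suc k)"
    unfolding e1 e2 cycle_adj_def using assms by simp
qed


lemma cd_step:
  assumes "cycle_adj p u v" "i < p"
  shows "cd p i v \<le> cd p i u + 1"
proof -
  have "u < p" "v < p" "v = Suc u mod p \<or> u = Suc v mod p" using assms(1) unfolding cycle_adj_def by auto
  moreover have "\<And>a. a < p \<Longrightarrow> Suc a mod p = (if Suc a < p then Suc a else 0)"
    by (metis Suc_lessI mod_less mod_self)
  ultimately have "v = Suc u \<and> Suc u < p \<or> v = 0 \<and> Suc u = p \<or> u = Suc v \<and> Suc v < p \<or> u = 0 \<and> Suc v = p"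
    by (metis less_nat_zero_code mod_Suc mod_less)
  then show ?thesis using assms(2) unfolding cd_def by (elim disjE conjE) (simp_all add: min_def; arith)+
qed

lemma cycle_walk_ex:
  assumes "i < p" "j < p"
  shows "\<exists>xs. is_walk (cycle_adj p) xs \<and> hd xs = i \<and> last xs = j \<and> length xs = Suc (cd p i j)"
proof -
  have p: "0 < p" using assms by simp
  have F: "\<exists>xs. is_walk (cycle_adj p) xs \<and> hd xs = i \<and> last xs = (i + d) mod p \<and> length xs = Suc d" for d
    using fwd_walk[OF p, of i d] by (intro exI[of _ "map (\<lambda>t. (i + t) mod p) [0..<Suc d]"]) (simp del: upt_Suc add: hd_map last_map assms)
  have B: "\<exists>xs. is_walk (cycle_adj p) xs \<and> hd xs = i \<and> last xs = (i + p - d) mod p \<and> length xs = Suc d" if "d \<le> p" for d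
    using bwd_walk[OF p that, of i] that assms by (intro exI[of _ "map (\<lambda>t. (i + p - t) mod p) [0..<Suc d]"]) (simp del: upt_Suc add: hd_map last_map)
  consider "i \<le> j" "j - i \<le> p - (j - i)" | "i \<le> j" "\<not> j - i \<le> p - (j - i)"
    | "j < i" "i - j \<le> p - (i - j)" | "j < i" "\<not> i - j \<le> p - (i - j)" by linarith
  then show ?thesis
  proof cases
    case 1
    then have "cd p i j = j - i" "(i + (j - i)) mod p = j" using assms unfolding cd_def by auto
    then show ?thesis using F[of "j - i"] by metis
  next
    case 2
    then have "cd p i j = p - (j - i)" "(i + p - (p - (j - i))) mod p = j" using assms unfolding cd_def by auto
    then show ?thesis using B[of "p - (j - i)"] by (metis diff_le_self)
  next
    case 3
    then have "cd p i j = i - j" "(i + p - (i - j)) mod p = j" using assms unfolding cd_def by auto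
    then show ?thesis using B[of "i - j"] assms by (metis diff_le_self less_imp_le_nat order.trans)
  next
    case 4
    then have "cd p i j = p - (i - j)" "(i + (p - (i - j))) mod p = j" using assms unfolding cd_def
      by (auto simp: add.commute)
    then show ?thesis using F[of "p - (i - j)"] by metis
  qed
qed

lemma gdist_cycle:
  assumes "i < p" "j < p"
  shows "gdist (cycle_adj p) i j = cd p i j"
proof -
  obtain xs where xs: "is_walk (cycle_adj p) xs" "hd xs = i" "last xs = j" "length xs = Suc (cd p i j)"
    using cycle_walk_ex[OF assms] by blast
  show ?thesis
  proof (rule gdist_eq[OF xs, where f="cd p i"])
    show "\<And>u v. cycle_adj p u v \<Longrightarrow> cd p i v \<le> cd p i u + 1" using cd_step assms by blast
  qed (auto simp: cd_def)
qed

lemma gdist_pendant: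
  assumes "i < p"
  shows "gdist (pendant_adj p) p i = cd p 0 i + 1"
proof -
  have p: "0 < p" using assms by simp
  obtain ys where ys: "is_walk (cycle_adj p) ys" "hd ys = 0" "last ys = i" "length ys = Suc (cd p 0 i)"
    using cycle_walk_ex[OF p assms] by blast
  have yne: "ys \<noteq> []" using ys(4) by auto
  have w: "is_walk (pendant_adj p) (p # ys)"
    unfolding is_walk_def
  proof (intro conjI allI impI)
    fix k assume k: "Suc k < length (p # ys)"
    show "pendant_adj p ((p # ys) ! k) ((p # ys) ! Suc k)"
    proof (cases k)
      case 0
      then show ?thesis using ys(2) yne by (simp add: hd_conv_nth pendant_adj_def)
    next
      case (Suc k')
      then have "cycle_adj p (ys ! k') (ys ! Suc k')" using ys(1) k unfolding is_walk_def by simp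
      then show ?thesis using Suc by (simp add: pendant_adj_def)
    qed
  qed simp
  let ?f = "\<lambda>v. if v = p then 0 else cd p 0 v + 1"
  have st: "?f v \<le> ?f u + 1" if uv: "pendant_adj p u v" for u v
  proof -
    consider "cycle_adj p u v" | "u = p" "v = 0" | "u = 0" "v = p" using uv by (auto simp: pendant_adj_def)
    then show ?thesis
    proof cases
      case 1
      then have "u < p" "v < p" unfolding cycle_adj_def by auto
      then show ?thesis using cd_step[OF 1 p] by simp
    qed (auto simp: cd_def)
  qed
  show ?thesis
    by (rule gdist_eq[OF w, where f="?f"]) (use ys yne assms st in \<open>auto simp: cd_def\<close>)
qed



definition cdz :: "nat \<Rightarrow> nat \<Rightarrow> nat" where "cdz p s = min s (p - s)"
lemma mod_lt2: "a < 2 * p \<Longrightarrow> (a::nat) mod p = (if a < p then a else a - p)"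
  by (simp add: le_mod_geq)
lemma nbz:
  assumes "p = 2 * m" "2 \<le> m" "s < p"
  shows "real (cdz p ((s + m + 1) mod p))^2 + real (cdz p ((s + (m - 1)) mod p))^2 =
     (if s = 0 then 2 * (real m - 1)^2 else 2 * (real m - real (cdz p s))^2 + 2)"
proof -
  have a: "(s + m + 1) mod p = (if s + m + 1 < p then s + m + 1 else s + m + 1 - p)" using assms by (intro mod_lt2) simp
  have b: "(s + (m - 1)) mod p = (if s + (m - 1) < p then s + (m - 1) else s + (m - 1) - p)" using assms by (intro mod_lt2) simp
  consider "s = 0" | "1 \<le> s" "s + 2 \<le> m" | "s + 1 = m" | "s = m" | "m + 1 \<le> s" by linarith
  then show ?thesis
  proof cases
    case 1
    then have h: "cdz p ((s + m + 1) mod p) = m - 1" "cdz p ((s + (m - 1)) mod p) = m - 1"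
      using assms unfolding a b cdz_def by auto
    then show ?thesis unfolding h using 1 assms by (simp add: of_nat_diff)
  next
    case 2
    then have h: "cdz p ((s + m + 1) mod p) = m - s - 1" "cdz p ((s + (m - 1)) mod p) = m - s + 1" "cdz p s = s"
      using assms unfolding a b cdz_def by auto
    then show ?thesis unfolding h using 2 assms by (simp add: of_nat_diff power2_eq_square algebra_simps)
  next
    case 3
    then have h: "cdz p ((s + m + 1) mod p) = 0" "cdz p ((s + (m - 1)) mod p) = 2" "cdz p s = m - 1"
      using assms unfolding a b cdz_def by auto
    then show ?thesis unfolding h using 3 assms by (simp add: of_nat_diff power2_eq_square algebra_simps)
  next
    case 4
    then have h: "cdz p ((s + m + 1) mod p) = 1" "cdz p ((s + (m - 1)) mod p) = 1" "cdz p s = m"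
      using assms unfolding a b cdz_def by auto
    then show ?thesis unfolding h using 4 assms by (simp add: of_nat_diff power2_eq_square algebra_simps)
  next
    case 5
    then have h: "cdz p ((s + m + 1) mod p) = s - m + 1" "cdz p ((s + (m - 1)) mod p) = s - m - 1" "cdz p s = 2 * m - s"
      using assms unfolding a b cdz_def by auto
    then show ?thesis unfolding h using 5 assms by (simp add: of_nat_diff power2_eq_square algebra_simps)
  qed
qed
lemma antz:
  assumes "p = 2 * m" "s < p"
  shows "cdz p ((s + m) mod p) = m - cdz p s"
proof -
  have a: "(s + m) mod p = (if s + m < p then s + m else s + m - p)" using assms by (intro mod_lt2) simp
  show ?thesis using assms unfolding a cdz_def by (cases "s + m < p") (auto simp: min_def)
qed

lemma cd_shift:
  assumes "i < p" "v < p"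
  shows "cd p i v = cdz p ((v + (p - i)) mod p)"
proof -
  have a: "(v + (p - i)) mod p = (if v + (p - i) < p then v + (p - i) else v + (p - i) - p)"
    using assms by (intro mod_lt2) simp
  show ?thesis using assms unfolding a cd_def cdz_def by (cases "i \<le> v") (auto simp: min_def)
qed

lemma modswap: "((a + b) mod p + c) mod p = ((a + c) mod (p::nat) + b) mod p"
proof -
  have "((a + b) mod p + c) mod p = (a + b + c) mod p" by (rule mod_add_left_eq)
  moreover have "((a + c) mod p + b) mod p = (a + c + b) mod p" by (rule mod_add_left_eq)
  ultimately show ?thesis by (simp add: ac_simps)
qed

lemma sum_cd_shift:
  fixes g :: "nat \<Rightarrow> real"
  assumes "i < p"
  shows "(\<Sum>k\<in>{0..<p}. g (cd p i k)) = (\<Sum>k\<in>{0..<p}. g (cdz p k))"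
proof (rule sum.reindex_bij_witness[where j="\<lambda>k. (k + (p - i)) mod p" and i="\<lambda>s. (s + i) mod p"])
  fix a assume a: "a \<in> {0..<p}"
  have "((a + (p - i)) mod p + i) mod p = (a + (p - i) + i) mod p" by (simp add: mod_add_left_eq)
  also have "\<dots> = a" using a assms by simp
  finally show "((a + (p - i)) mod p + i) mod p = a" .
  show "(a + (p - i)) mod p \<in> {0..<p}" using assms by simp
  show "g (cdz p ((a + (p - i)) mod p)) = g (cd p i a)" using cd_shift[OF assms, of a] a by simp
next
  fix b assume b: "b \<in> {0..<p}"
  have "((b + i) mod p + (p - i)) mod p = (b + i + (p - i)) mod p" by (simp add: mod_add_left_eq)
  also have "\<dots> = b" using b assms by simp
  finally show "((b + i) mod p + (p - i)) mod p = b" .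
  show "(b + i) mod p \<in> {0..<p}" using assms by simp
qed

lemma sum_one_to:
  fixes g :: "nat \<Rightarrow> real"
  shows "(\<Sum>l\<in>{Suc 0..m}. g l) = (\<Sum>l\<in>{0..<m}. g l) + g m - g 0"
  by (induction m) (simp_all add: sum.atLeastLessThan_Suc)

lemma sum_cdz:
  fixes g :: "nat \<Rightarrow> real"
  assumes "p = 2 * m"
  shows "(\<Sum>k\<in>{0..<p}. g (cdz p k)) = g m + 2 * (\<Sum>k\<in>{0..<m}. g k) - g 0"
proof -
  have "(\<Sum>k\<in>{0..<p}. g (cdz p k)) = (\<Sum>k\<in>{0..<m}. g (cdz p k)) + (\<Sum>k\<in>{m..<p}. g (cdz p k))"
    using assms by (simp add: sum.atLeastLessThan_concat)
  also have "(\<Sum>k\<in>{0..<m}. g (cdz p k)) = (\<Sum>k\<in>{0..<m}. g k)"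
    using assms by (intro sum.cong) (auto simp: cdz_def)
  also have "(\<Sum>k\<in>{m..<p}. g (cdz p k)) = (\<Sum>l\<in>{Suc 0..m}. g l)"
  proof (rule sum.reindex_bij_witness[where j="\<lambda>k. p - k" and i="\<lambda>l. p - l"])
    fix a assume "a \<in> {m..<p}"
    then show "p - (p - a) = a" "p - a \<in> {Suc 0..m}" "g (p - a) = g (cdz p a)"
      using assms by (auto simp: cdz_def)
  next
    fix b assume "b \<in> {Suc 0..m}"
    then show "p - (p - b) = b" "p - b \<in> {m..<p}" using assms by auto
  qed
  finally show ?thesis by (simp add: sum_one_to)
qed

lemma sum_sq: "(\<Sum>k\<in>{0..<m}. real k ^ 2) = real m * (real m - 1) * (2 * real m - 1) / 6"
  by (induction m) (simp_all add: power2_eq_square algebra_simps add_divide_distrib)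

lemma sum_lin: "(\<Sum>k\<in>{0..<m}. real k) = real m * (real m - 1) / 2"
  by (induction m) (simp_all add: algebra_simps add_divide_distrib)

lemma rowsum:
  assumes "p = 2 * m" "i < p"
  shows "(\<Sum>k\<in>{0..<p}. real (cd p i k) ^ 2) = real m * (2 * real m ^ 2 + 1) / 3"
proof -
  have "(\<Sum>k\<in>{0..<p}. real (cd p i k) ^ 2) = (\<Sum>k\<in>{0..<p}. real (cdz p k) ^ 2)"
    using sum_cd_shift[OF assms(2), of "\<lambda>t. real t ^ 2"] by simp
  also have "\<dots> = real m ^ 2 + 2 * (\<Sum>k\<in>{0..<m}. real k ^ 2)"
    using sum_cdz[OF assms(1), of "\<lambda>t. real t ^ 2"] by simp
  finally show ?thesis unfolding sum_sq by (simp add: power2_eq_square field_simps)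
qed

lemma sum_cdz_lin:
  assumes "p = 2 * m"
  shows "(\<Sum>k\<in>{0..<p}. real (cdz p k)) = real m ^ 2"
  using sum_cdz[OF assms, of real] unfolding sum_lin by (simp add: power2_eq_square field_simps)

lemma sum_cdz_sq:
  assumes "p = 2 * m"
  shows "(\<Sum>k\<in>{0..<p}. real (cdz p k) ^ 2) = real m * (2 * real m ^ 2 + 1) / 3"
  using sum_cdz[OF assms, of "\<lambda>t. real t ^ 2"] unfolding sum_sq
  by (simp add: power2_eq_square field_simps)



lemma comb:
  fixes f :: "nat \<Rightarrow> real"
  assumes "u < p" "w < p" "z < p"
  shows "(\<Sum>k\<in>{0..<p}. f k * (\<alpha> + (if k = u then \<beta> else 0) + (if k = w then \<gamma> else 0) + (if k = z then \<delta> else 0)))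
    = \<alpha> * (\<Sum>k\<in>{0..<p}. f k) + \<beta> * f u + \<gamma> * f w + \<delta> * f z"
proof -
  have "(\<Sum>k\<in>{0..<p}. f k * (\<alpha> + (if k = u then \<beta> else 0) + (if k = w then \<gamma> else 0) + (if k = z then \<delta> else 0)))
    = (\<Sum>k\<in>{0..<p}. \<alpha> * f k + (if k = u then \<beta> * f k else 0) + (if k = w then \<gamma> * f k else 0) + (if k = z then \<delta> * f k else 0))"
    by (intro sum.cong) (auto simp: algebra_simps)
  also have "\<dots> = \<alpha> * (\<Sum>k\<in>{0..<p}. f k) + \<beta> * f u + \<gamma> * f w + \<delta> * f z"
    using assms by (simp add: sum.distrib sum_distrib_left sum.delta)
  finally show ?thesis .
qed

lemma s_zero_iff:
  fixes i j p :: nat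
  assumes "i < p" "j < p"
  shows "(j + (p - i)) mod p = 0 \<longleftrightarrow> i = j"
proof -
  have lt: "j + (p - i) < 2 * p" using assms by linarith
  have a: "(j + (p - i)) mod p = (if j + (p - i) < p then j + (p - i) else j + (p - i) - p)"
    using mod_lt2[OF lt] .
  show ?thesis using assms unfolding a by auto
qed

lemma cdz_le: "p = 2 * m \<Longrightarrow> cdz p s \<le> m"
  unfolding cdz_def by simp

lemma D_idx: "i < p \<Longrightarrow> j < p \<Longrightarrow> cycle_dsq p $$ (i, j) = real (cd p i j) ^ 2"
  unfolding cycle_dsq_def by (simp add: gdist_cycle)

lemma D_dims: "cycle_dsq p \<in> carrier_mat p p"
  unfolding cycle_dsq_def by simp

definition Bz :: "nat \<Rightarrow> nat \<Rightarrow> real mat" where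
  "Bz p m = mat p p (\<lambda>(k, j). 1 / (2 * real m * (real m * (2 * real m ^ 2 + 1) / 3))
     + (if k = (j + (m + 1)) mod p then - 1 / (4 * real m) else 0)
     + (if k = (j + (m - 1)) mod p then - 1 / (4 * real m) else 0)
     + (if k = (j + m) mod p then 1 / (2 * real m) else 0))"

lemma DB:
  assumes "p = 2 * m" "2 \<le> m"
  shows "cycle_dsq p * Bz p m = 1\<^sub>m p"
proof (rule eq_matI)
  show "dim_row (cycle_dsq p * Bz p m) = dim_row (1\<^sub>m p)" "dim_col (cycle_dsq p * Bz p m) = dim_col (1\<^sub>m p)"
    by (simp_all add: cycle_dsq_def Bz_def)
  fix i j assume "i < dim_row (1\<^sub>m p)" "j < dim_col (1\<^sub>m p)"
  then have ij: "i < p" "j < p" by auto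
  define S where "S = real m * (2 * real m ^ 2 + 1) / 3"
  have Spos: "S > 0" using assms unfolding S_def by (simp add: add_pos_nonneg)
  have mp: "0 < m" using assms by simp
  define s where "s = (j + (p - i)) mod p"
  have sp: "s < p" using ij unfolding s_def by simp
  have "(cycle_dsq p * Bz p m) $$ (i, j) = (\<Sum>k\<in>{0..<p}. real (cd p i k) ^ 2 *
     (1 / (2 * real m * S)
     + (if k = (j + (m + 1)) mod p then - 1 / (4 * real m) else 0)
     + (if k = (j + (m - 1)) mod p then - 1 / (4 * real m) else 0)
     + (if k = (j + m) mod p then 1 / (2 * real m) else 0)))"
    using ij unfolding S_def
    by (auto simp: cycle_dsq_def Bz_def scalar_prod_def gdist_cycle intro!: sum.cong)
  also have "\<dots> = 1 / (2 * real m * S) * S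
     - 1 / (4 * real m) * (real (cd p i ((j + (m + 1)) mod p)) ^ 2 + real (cd p i ((j + (m - 1)) mod p)) ^ 2)
     + 1 / (2 * real m) * real (cd p i ((j + m) mod p)) ^ 2"
    using ij assms by (subst comb) (auto simp: rowsum S_def algebra_simps)
  also have "cd p i ((j + (m + 1)) mod p) = cdz p ((s + (m + 1)) mod p)"
  proof -
    have "cd p i ((j + (m + 1)) mod p) = cdz p (((j + (m + 1)) mod p + (p - i)) mod p)"
      using ij by (intro cd_shift) auto
    also have "\<dots> = cdz p ((s + (m + 1)) mod p)"
      unfolding s_def modswap[where a=j and b="m + 1" and c="p - i" and p=p] ..
    finally show ?thesis .
  qed
  also have "cd p i ((j + (m - 1)) mod p) = cdz p ((s + (m - 1)) mod p)"
  proof -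
    have "cd p i ((j + (m - 1)) mod p) = cdz p (((j + (m - 1)) mod p + (p - i)) mod p)"
      using ij by (intro cd_shift) auto
    also have "\<dots> = cdz p ((s + (m - 1)) mod p)"
      unfolding s_def modswap[where a=j and b="m - 1" and c="p - i" and p=p] ..
    finally show ?thesis .
  qed
  also have "cd p i ((j + m) mod p) = m - cdz p s"
  proof -
    have "cd p i ((j + m) mod p) = cdz p (((j + m) mod p + (p - i)) mod p)"
      using ij by (intro cd_shift) auto
    also have "\<dots> = cdz p ((s + m) mod p)"
      unfolding s_def modswap[where a=j and b="m" and c="p - i" and p=p] ..
    also have "\<dots> = m - cdz p s" by (rule antz[OF assms(1) sp])
    finally show ?thesis .
  qed
  also have "real (cdz p ((s + (m + 1)) mod p)) ^ 2 + real (cdz p ((s + (m - 1)) mod p)) ^ 2 =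
     (if s = 0 then 2 * (real m - 1)^2 else 2 * (real m - real (cdz p s))^2 + 2)"
    using nbz[OF assms sp] by (simp add: add.assoc)
  finally have eq: "(cycle_dsq p * Bz p m) $$ (i, j) = 1 / (2 * real m * S) * S -
    1 / (4 * real m) * (if s = 0 then 2 * (real m - 1)\<^sup>2 else 2 * (real m - real (cdz p s))\<^sup>2 + 2) +
    1 / (2 * real m) * (real m - real (cdz p s))\<^sup>2"
    using cdz_le[OF assms(1), of s] by (simp add: of_nat_diff)
  show "(cycle_dsq p * Bz p m) $$ (i, j) = 1\<^sub>m p $$ (i, j)"
  proof (cases "i = j")
    case True
    then have "s = 0" using s_zero_iff[OF ij] unfolding s_def by simp
    then show ?thesis using True ij Spos mp unfolding eq by (simp add: cdz_def field_simps power2_eq_square)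
  next
    case False
    then have "s \<noteq> 0" using s_zero_iff[OF ij] unfolding s_def by simp
    then show ?thesis using False ij Spos mp unfolding eq by (simp add: field_simps power2_eq_square)
  qed
qed


lemma comb2:
  fixes f :: "nat \<Rightarrow> real"
  assumes "u < p" "w < p"
  shows "(\<Sum>k\<in>{0..<p}. f k * (\<alpha> + (if k = u then \<beta> else 0) + (if k = w then \<gamma> else 0)))
    = \<alpha> * (\<Sum>k\<in>{0..<p}. f k) + \<beta> * f u + \<gamma> * f w"
  using comb[OF assms assms(1), of f \<alpha> \<beta> \<gamma> 0] by simp

lemma cd_sym: "cd p i j = cd p j i"
  unfolding cd_def by (simp add: add.commute)

lemma cd0: "cd p 0 k = cdz p k"
  unfolding cd_def cdz_def by simp

theorem lemma6p2:
  fixes m p :: nat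
  assumes "p = 2 * m" and "p \<ge> 4"
  shows "invertible_mat (cycle_dsq p) \<and>
    (\<forall>B. B \<in> carrier_mat p p \<and> cycle_dsq p * B = 1\<^sub>m p \<and> B * cycle_dsq p = 1\<^sub>m p \<longrightarrow>
       pendant_vec p \<bullet> (B *\<^sub>v pendant_vec p) > 0)"
proof -
  have m2: "2 \<le> m" using assms by simp
  have mp: "0 < m" "m < p" using assms by auto
  have Dc: "cycle_dsq p \<in> carrier_mat p p" by (rule D_dims)
  have Bc: "Bz p m \<in> carrier_mat p p" unfolding Bz_def by simp
  have DB: "cycle_dsq p * Bz p m = 1\<^sub>m p" by (rule DB[OF assms(1) m2])
  have BD: "Bz p m * cycle_dsq p = 1\<^sub>m p" by (rule mat_mult_left_right_inverse[OF Dc Bc DB])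
  have inv: "invertible_mat (cycle_dsq p)"
    unfolding invertible_mat_def inverts_mat_def square_mat.simps
    using Dc Bc DB BD by (intro conjI exI[of _ "Bz p m"]) auto
  define S where "S = real m * (2 * real m ^ 2 + 1) / 3"
  have Spos: "S > 0" using m2 unfolding S_def by (simp add: add_pos_nonneg)
  define y where "y = vec p (\<lambda>k. (real m + 1) / S + (if k = 0 then 1 + 1 / real m else 0) + (if k = m then - 1 / real m else 0))"
  define x where "x = pendant_vec p"
  have xi: "x $ i = (real (cdz p i) + 1) ^ 2" if "i < p" for i
    unfolding x_def pendant_vec_def using that by (simp add: gdist_pendant cd0)
  have xc: "x \<in> carrier_vec p" unfolding x_def pendant_vec_def by simp
  have yc: "y \<in> carrier_vec p" unfolding y_def by simp
  have Dy: "cycle_dsq p *\<^sub>v y = x"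
  proof (rule eq_vecI)
    show "dim_vec (cycle_dsq p *\<^sub>v y) = dim_vec x" using xc Dc by simp
    fix i assume "i < dim_vec x"
    then have i: "i < p" using xc by simp
    define s where "s = (0 + (p - i)) mod p"
    have sp: "s < p" using i unfolding s_def by simp
    have t: "cd p i 0 = cdz p s" unfolding s_def using i mp by (intro cd_shift) auto
    have tm: "cd p i m = m - cdz p s"
    proof -
      have "cd p i ((0 + m) mod p) = cdz p (((0 + m) mod p + (p - i)) mod p)"
        using i by (intro cd_shift) auto
      also have "\<dots> = cdz p ((s + m) mod p)"
        unfolding s_def modswap[where a=0 and b="m" and c="p - i" and p=p] ..
      also have "\<dots> = m - cdz p s" by (rule antz[OF assms(1) sp])
      finally show ?thesis using mp by simp
    qed
    have tle: "cdz p s \<le> m" by (rule cdz_le[OF assms(1)])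
    have "(cycle_dsq p *\<^sub>v y) $ i = (\<Sum>k\<in>{0..<p}. real (cd p i k) ^ 2 *
       ((real m + 1) / S + (if k = 0 then 1 + 1 / real m else 0) + (if k = m then - 1 / real m else 0)))"
      using i Dc unfolding y_def by (auto simp: scalar_prod_def D_idx intro!: sum.cong)
    also have "\<dots> = (real m + 1) / S * S + (1 + 1 / real m) * real (cd p i 0) ^ 2 + (- 1 / real m) * real (cd p i m) ^ 2"
      using comb2[OF _ mp(2), of 0] i assms(1) mp by (simp add: rowsum S_def)
    also have "\<dots> = (real (cdz p s) + 1) ^ 2"
      unfolding t tm using Spos mp tle by (simp add: of_nat_diff field_simps power2_eq_square)
    also have "cdz p s = cdz p i"
      using t i mp by (metis cd0 cd_sym)
    finally show "(cycle_dsq p *\<^sub>v y) $ i = x $ i" using xi[OF i] by simp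
  qed
  have xy: "x \<bullet> y > 0"
  proof -
    have "x \<bullet> y = (\<Sum>k\<in>{0..<p}. (real (cdz p k) + 1) ^ 2 *
       ((real m + 1) / S + (if k = 0 then 1 + 1 / real m else 0) + (if k = m then - 1 / real m else 0)))"
      unfolding scalar_prod_def using yc by (auto simp: xi y_def intro!: sum.cong)
    also have "\<dots> = (real m + 1) / S * (\<Sum>k\<in>{0..<p}. (real (cdz p k) + 1) ^ 2) + (1 + 1 / real m) * (real (cdz p 0) + 1) ^ 2
        + (- 1 / real m) * (real (cdz p m) + 1) ^ 2"
      using comb2[OF _ mp(2), of 0] mp by simp
    also have "(\<Sum>k\<in>{0..<p}. (real (cdz p k) + 1) ^ 2) = (\<Sum>k\<in>{0..<p}. real (cdz p k) ^ 2) + 2 * (\<Sum>k\<in>{0..<p}. real (cdz p k)) + real p"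
      by (simp add: power2_sum sum.distrib sum_distrib_left)
    also have "\<dots> = S + 2 * real m ^ 2 + 2 * real m"
      unfolding sum_cdz_sq[OF assms(1)] sum_cdz_lin[OF assms(1)] S_def using assms(1) by simp
    also have "cdz p 0 = 0" unfolding cdz_def by simp
    also have "cdz p m = m" unfolding cdz_def using assms(1) by simp
    finally have "x \<bullet> y = (real m + 1) / S * (S + 2 * (real m)\<^sup>2 + 2 * real m) + (1 + 1 / real m) * (real 0 + 1)\<^sup>2 +
        - 1 / real m * (real m + 1)\<^sup>2" .
    also have "\<dots> = (real m + 1) * (2 * real m ^ 2 + 2 * real m) / S"
      using Spos mp by (simp add: field_simps power2_eq_square)
    also have "\<dots> > 0" using Spos mp by (intro divide_pos_pos mult_pos_pos add_pos_pos) auto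
    finally show ?thesis .
  qed
  show ?thesis
  proof (intro conjI allI impI inv)
    fix B assume B: "B \<in> carrier_mat p p \<and> cycle_dsq p * B = 1\<^sub>m p \<and> B * cycle_dsq p = 1\<^sub>m p"
    have "B *\<^sub>v x = B *\<^sub>v (cycle_dsq p *\<^sub>v y)" using Dy by simp
    also have "\<dots> = (B * cycle_dsq p) *\<^sub>v y"
      using B Dc yc by (intro assoc_mult_mat_vec[symmetric]) auto
    also have "\<dots> = y" using B yc by simp
    finally show "pendant_vec p \<bullet> (B *\<^sub>v pendant_vec p) > 0" using xy unfolding x_def by simp
  qed
qed


end
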